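(* Let $X$ be a paracompact topological space, let $Y$ be a Banach space, and let $f:X\to Y$ be a function. Then $f$ is Baire-1 if and only if there is a sequence $(G_n)_{n=1}^{\infty}$ of open strips in $X\times Y$ such that $\bigcap_{n=1}^{\infty}G_n=gr(f)$ and $diam(G_n(x))\to 0$ as $n\to\infty$ for each $x\in X$.
   Context: $gr(f)=\{(x,f(x)):x\in X\}\subseteq X\times Y$ is the graph of $f$. For $G\subseteq X\times Y$ and $x\in X$, the vertical section is $G(x)=\{y\in Y:(x,y)\in G\}$ (identified with $G\cap(\{x\}\times Y)$). An open strip is an open set $G\subseteq X\times Y$ such that $G(x)$ is convex for every $x\in X$. The diameter is taken with respect to the norm of $Y$. A function is Baire-0 if it is continuous, and for a countable ordinal $\alpha\ge 1$ it is Baire-$\alpha$ if it is the pointwise limit of a sequence of functions $f_n$, each Baire-$\alpha_n$ for some $\alpha_n<\alpha$; in particular, Baire-1 functions are pointwise limits of sequences of continuous functions. *)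

theory Defs
  imports "HOL-Analysis.Analysis"
begin

text \<open>Paracompactness of the whole space (type): every open cover has a locally
  finite open refinement.  Hausdorffness is imposed separately via the class t2_space.\<close>
definition paracompact_space :: "'a::topological_space itself \<Rightarrow> bool" where
  "paracompact_space _ \<longleftrightarrow>
     (\<forall>\<U>::'a set set. (\<forall>U\<in>\<U>. open U) \<and> \<Union>\<U> = UNIV \<longrightarrow>
        (\<exists>\<V>::'a set set. (\<forall>V\<in>\<V>. open V) \<and> \<Union>\<V> = UNIV \<and>
              (\<forall>V\<in>\<V>. \<exists>U\<in>\<U>. V \<subseteq> U) \<and> locally_finite_in euclidean \<V>))"

definition baire1 :: "('a::topological_space \<Rightarrow> 'b::topological_space) \<Rightarrow> bool" where
  "baire1 f \<longleftrightarrow> (\<exists>g :: nat \<Rightarrow> 'a \<Rightarrow> 'b. (\<forall>n. continuous_on UNIV (g n)) \<and>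
                                     (\<forall>x. (\<lambda>n. g n x) \<longlonglongrightarrow> f x))"

definition graph_of :: "('a \<Rightarrow> 'b) \<Rightarrow> ('a \<times> 'b) set" where
  "graph_of f = {(x, f x) | x. True}"

definition vsection :: "('a \<times> 'b) set \<Rightarrow> 'a \<Rightarrow> 'b set" where
  "vsection G x = {y. (x, y) \<in> G}"

definition open_strip :: "('a::topological_space \<times> 'b::real_normed_vector) set \<Rightarrow> bool" where
  "open_strip G \<longleftrightarrow> open G \<and> (\<forall>x. convex (vsection G x))"

text \<open>Diameter with values in the extended reals, so unbounded sets have diameter \<infinity>.\<close>
definition ediam :: "'b::metric_space set \<Rightarrow> ereal" where
  "ediam S = (SUP p\<in>S \<times> S. ereal (dist (fst p) (snd p)))"

end

theory Submission
  imports Defs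
begin
lemma ediam_le:
  assumes "\<And>y z. y \<in> S \<Longrightarrow> z \<in> S \<Longrightarrow> dist y z \<le> r"
  shows "ediam S \<le> ereal r"
  unfolding ediam_def using assms by (auto intro!: SUP_least)

lemma ediam_ge:
  assumes "y \<in> S" "z \<in> S"
  shows "ereal (dist y z) \<le> ediam S"
  unfolding ediam_def using assms by (auto intro!: SUP_upper2[of "(y,z)"])

lemma forward:
  fixes f :: "'a::topological_space \<Rightarrow> 'b::real_normed_vector"
  assumes "baire1 f"
  shows "\<exists>G :: nat \<Rightarrow> ('a \<times> 'b) set. (\<forall>n. open_strip (G n)) \<and>
        (\<Inter>n. G n) = graph_of f \<and>
        (\<forall>x. (\<lambda>n. ediam (vsection (G n) x)) \<longlonglongrightarrow> 0)"
proof -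
  obtain g :: "nat \<Rightarrow> 'a \<Rightarrow> 'b" where gc: "\<And>n. continuous_on UNIV (g n)"
    and gl: "\<And>x. (\<lambda>n. g n x) \<longlonglongrightarrow> f x"
    using assms unfolding baire1_def by blast
  define G where "G n = {(x,y). \<exists>k\<ge>n. \<exists>m\<ge>n. norm (y - g n x) < norm (g k x - g m x) + 1 / Suc n}" for n
  have sec: "vsection (G n) x = {y. \<exists>k\<ge>n. \<exists>m\<ge>n. norm (y - g n x) < norm (g k x - g m x) + 1 / Suc n}" for n x
    unfolding vsection_def G_def by auto
  have cau: "\<exists>N. \<forall>k\<ge>N. \<forall>m\<ge>N. norm (g k x - g m x) < e" if "e > 0" for x e
  proof -
    have "Cauchy (\<lambda>n. g n x)" using gl convergent_Cauchy convergent_def by blast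
    then show ?thesis using that unfolding Cauchy_def dist_norm by blast
  qed
  have opn: "open (G n)" for n
  proof -
    have cg: "continuous_on UNIV (\<lambda>p::'a\<times>'b. g j (fst p))" for j
      by (rule continuous_on_compose2[OF gc[of j]]) (auto intro: continuous_intros)
    have "G n = (\<Union>k\<in>{n..}. \<Union>m\<in>{n..}. {p. norm (snd p - g n (fst p)) < norm (g k (fst p) - g m (fst p)) + 1 / Suc n})"
      unfolding G_def by (auto; blast)
    also have "open \<dots>"
      by (intro open_UN ballI open_Collect_less continuous_intros cg)
    finally show ?thesis .
  qed
  have cvx: "convex (vsection (G n) x)" for n x
    unfolding convex_def
  proof (intro allI impI ballI)
    fix y z :: 'b and u v :: real
    assume y: "y \<in> vsection (G n) x" and z: "z \<in> vsection (G n) x" and uv: "0 \<le> u" "0 \<le> v" "u + v = 1"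
    obtain k1 m1 where 1: "k1 \<ge> n" "m1 \<ge> n" "norm (y - g n x) < norm (g k1 x - g m1 x) + 1 / Suc n"
      using y sec by auto
    obtain k2 m2 where 2: "k2 \<ge> n" "m2 \<ge> n" "norm (z - g n x) < norm (g k2 x - g m2 x) + 1 / Suc n"
      using z sec by auto
    obtain k m where km: "k \<ge> n" "m \<ge> n" "norm (g k1 x - g m1 x) \<le> norm (g k x - g m x)"
      "norm (g k2 x - g m2 x) \<le> norm (g k x - g m x)"
      using 1 2 by (metis nle_le order_refl)
    define R where "R = norm (g k x - g m x) + 1 / Suc n"
    have "y \<in> ball (g n x) R" "z \<in> ball (g n x) R"
      using 1 2 km unfolding R_def by (auto simp: dist_norm norm_minus_commute)
    then have "u *\<^sub>R y + v *\<^sub>R z \<in> ball (g n x) R"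
      using convex_ball[of "g n x" R] uv unfolding convex_def by blast
    then show "u *\<^sub>R y + v *\<^sub>R z \<in> vsection (G n) x"
      using km unfolding sec R_def by (auto simp: dist_norm norm_minus_commute)
  qed
  have graph: "(\<Inter>n. G n) = graph_of f"
  proof
    show "graph_of f \<subseteq> (\<Inter>n. G n)"
    proof (clarsimp simp: graph_of_def)
      fix x n
      have "(\<lambda>k. norm (g k x - g n x)) \<longlonglongrightarrow> norm (f x - g n x)"
        by (intro tendsto_intros gl)
      moreover have "norm (f x - g n x) - 1 / Suc n < norm (f x - g n x)" by simp
      ultimately have "eventually (\<lambda>k. norm (f x - g n x) - 1 / Suc n < norm (g k x - g n x)) sequentially"
        by (rule order_tendstoD)
      then obtain K where K: "\<And>k. k \<ge> K \<Longrightarrow> norm (f x - g n x) - 1 / Suc n < norm (g k x - g n x)"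
        unfolding eventually_sequentially by blast
      show "(x, f x) \<in> G n"
        unfolding G_def using K[of "max K n"] by (simp; intro exI[of _ "max K n"] conjI exI[of _ n]; simp)
    qed
  next
    show "(\<Inter>n. G n) \<subseteq> graph_of f"
    proof (clarsimp simp: graph_of_def)
      fix x y assume all: "\<forall>n. (x, y) \<in> G n"
      have "(\<lambda>n. g n x) \<longlonglongrightarrow> y"
      proof (rule metric_LIMSEQ_I)
        fix r :: real assume r: "r > 0"
        obtain N where N: "\<And>k m. k \<ge> N \<Longrightarrow> m \<ge> N \<Longrightarrow> norm (g k x - g m x) < r/2"
          using cau[of "r/2" x] r by auto
        obtain M :: nat where M: "M > 2 / r" using reals_Archimedean2 by blast
        show "\<exists>no. \<forall>n\<ge>no. dist (g n x) y < r"
        proof (intro exI allI impI)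
          fix n assume n: "n \<ge> max N M"
          obtain k m where km: "k \<ge> n" "m \<ge> n" "norm (y - g n x) < norm (g k x - g m x) + 1 / Suc n"
            using all[rule_format, of n] unfolding G_def by auto
          have "norm (g k x - g m x) < r/2" using N km n by auto
          moreover have "1 / real (Suc n) < r/2"
          proof -
            have "2 / r < Suc n" using M n by linarith
            then show ?thesis using r by (simp add: field_simps)
          qed
          ultimately show "dist (g n x) y < r" using km by (simp add: dist_norm norm_minus_commute)
        qed
      qed
      then show "y = f x" using gl LIMSEQ_unique by blast
    qed
  qed
  have diam: "(\<lambda>n. ediam (vsection (G n) x)) \<longlonglongrightarrow> 0" for x
  proof (rule order_tendstoI)
    fix a :: ereal assume "a < 0"
    have "g n x \<in> vsection (G n) x" for n unfolding sec by (auto intro!: exI[of _ n] add_nonneg_pos)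
    then have "0 \<le> ediam (vsection (G n) x)" for n using ediam_ge[of "g n x" _ "g n x"] by (simp add: zero_ereal_def)
    then show "eventually (\<lambda>n. a < ediam (vsection (G n) x)) sequentially"
      using \<open>a < 0\<close> by (intro always_eventually allI) (meson order.strict_trans2)
  next
    fix a :: ereal assume "a > 0"
    obtain e :: real where e: "e > 0" "ereal (4*e) < a"
    proof (cases a)
      case (real r) then show ?thesis using \<open>a > 0\<close> that[of "r/8"] by auto
    next
      case PInf then show ?thesis using that[of 1] by auto
    qed (use \<open>a > 0\<close> in auto)
    obtain N where N: "\<And>k m. k \<ge> N \<Longrightarrow> m \<ge> N \<Longrightarrow> norm (g k x - g m x) < e"
      using cau[of e x] e by auto
    obtain M :: nat where M: "M > 1 / e" using reals_Archimedean2 by blast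
    show "eventually (\<lambda>n. ediam (vsection (G n) x) < a) sequentially"
      unfolding eventually_sequentially
    proof (intro exI allI impI)
      fix n assume n: "n \<ge> max N M"
      have inv: "1 / real (Suc n) < e"
      proof -
        have "1 / e < Suc n" using M n by linarith
        then show ?thesis using e by (simp add: field_simps)
      qed
      have b: "norm (y - g n x) < 2 * e" if hy: "y \<in> vsection (G n) x" for y
      proof -
        obtain k m where km: "k \<ge> n" "m \<ge> n" "norm (y - g n x) < norm (g k x - g m x) + 1 / Suc n"
          using hy unfolding sec by auto
        then show ?thesis using N[of k m] n inv by auto
      qed
      have "ediam (vsection (G n) x) \<le> ereal (4*e)"
      proof (rule ediam_le)
        fix y z assume "y \<in> vsection (G n) x" "z \<in> vsection (G n) x"
        then have "norm (y - g n x) < 2*e" "norm (z - g n x) < 2*e" using b by auto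
        then show "dist y z \<le> 4*e"
          using norm_triangle_ineq4[of "y - g n x" "z - g n x"] by (simp add: dist_norm)
      qed
      then show "ediam (vsection (G n) x) < a" using e by auto
    qed
  qed
  show ?thesis
    by (intro exI[of _ G] conjI allI graph diam) (auto simp: open_strip_def opn cvx)
qed

lemma para_sep:
  fixes C A :: "'a::topological_space set"
  assumes P: "paracompact_space TYPE('a)" and C: "closed C"
   and W: "\<forall>c\<in>C. \<exists>W. open W \<and> c \<in> W \<and> closure W \<inter> A = {}"
  shows "\<exists>W. open W \<and> C \<subseteq> W \<and> closure W \<inter> A = {}"
proof -
  obtain w where w: "\<And>c. c \<in> C \<Longrightarrow> open (w c) \<and> c \<in> w c \<and> closure (w c) \<inter> A = {}"
    using bchoice[OF W] by blast
  define \<U> where "\<U> = insert (-C) (w ` C)"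
  have "(\<forall>U\<in>\<U>. open U) \<and> \<Union>\<U> = UNIV"
  proof
    show "\<forall>U\<in>\<U>. open U" unfolding \<U>_def using w C by (simp add: open_Compl)
    show "\<Union>\<U> = UNIV"
    proof (rule set_eqI, rule iffI)
      fix x :: 'a
      show "x \<in> \<Union>\<U>"
      proof (cases "x \<in> C")
        case True then show ?thesis using w[of x] unfolding \<U>_def by blast
      next
        case False then show ?thesis unfolding \<U>_def by blast
      qed
    qed simp
  qed
  then obtain \<V> :: "'a set set" where V: "\<forall>V\<in>\<V>. open V" "\<Union>\<V> = UNIV"
     "\<forall>V\<in>\<V>. \<exists>U\<in>\<U>. V \<subseteq> U" "locally_finite_in euclidean \<V>"
    using mp[OF spec[OF P[unfolded paracompact_space_def], of \<U>]] by blast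
  define \<V>' where "\<V>' = {V\<in>\<V>. V \<inter> C \<noteq> {}}"
  have lf: "locally_finite_in euclidean \<V>'"
    by (rule locally_finite_in_subset[OF V(4)]) (auto simp: \<V>'_def)
  have cl: "closure (\<Union>\<V>') = \<Union>(closure ` \<V>')"
    using closure_of_locally_finite_Union[OF lf] by simp
  show ?thesis
  proof (intro exI conjI)
    show "open (\<Union>\<V>')" using V(1) unfolding \<V>'_def by (intro open_Union) blast
    show "C \<subseteq> \<Union>\<V>'"
    proof
      fix c assume "c \<in> C"
      have "c \<in> \<Union>\<V>" using V(2) by simp
      then obtain V where "V \<in> \<V>" "c \<in> V" by (rule UnionE)
      with \<open>c \<in> C\<close> have "V \<in> \<V>'" unfolding \<V>'_def by blast
      then show "c \<in> \<Union>\<V>'" using \<open>c \<in> V\<close> by blast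
    qed
    have "closure V \<inter> A = {}" if hV: "V \<in> \<V>'" for V
    proof -
      have V1: "V \<in> \<V>" and V2: "V \<inter> C \<noteq> {}" using hV unfolding \<V>'_def by simp_all
      from V(3) V1 obtain U where U: "U \<in> \<U>" "V \<subseteq> U" by blast
      have "U \<noteq> -C"
      proof
        assume "U = -C"
        then have "V \<inter> C = {}" using U(2) by auto
        then show False using V2 by simp
      qed
      then have "U \<in> w ` C" using U(1) unfolding \<U>_def by simp
      then obtain c where "c \<in> C" "U = w c" by (rule imageE) simp
      then have "closure V \<subseteq> closure (w c)" using closure_mono[OF U(2)] by simp
      then show ?thesis using w[OF \<open>c \<in> C\<close>] by auto
    qed
    then show "closure (\<Union>\<V>') \<inter> A = {}" unfolding cl by auto
  qed
qed

lemma para_regular: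
  fixes D :: "'a::t2_space set"
  assumes P: "paracompact_space TYPE('a)" and D: "closed D" "x \<notin> D"
  shows "\<exists>W. open W \<and> x \<in> W \<and> closure W \<inter> D = {}"
proof -
  have "\<forall>c\<in>D. \<exists>W. open W \<and> c \<in> W \<and> closure W \<inter> {x} = {}"
  proof
    fix c assume "c \<in> D"
    then have "x \<noteq> c" using D by auto
    from hausdorff[OF this] obtain U V where UV: "open U" "open V" "x \<in> U" "c \<in> V" "U \<inter> V = {}"
      by blast
    then have "U \<inter> closure V = {}" using open_Int_closure_eq_empty[OF UV(1)] by simp
    then have "closure V \<inter> {x} = {}" using UV(3) by auto
    then show "\<exists>W. open W \<and> c \<in> W \<and> closure W \<inter> {x} = {}"
      using UV(2,4) by blast
  qed
  from para_sep[OF P D(1) this] obtain W' where W': "open W'" "D \<subseteq> W'" "closure W' \<inter> {x} = {}"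
    by blast
  have "closure (- closure W') \<subseteq> - W'"
    by (rule closure_minimal) (use W'(1) closure_subset in auto)
  moreover have "open (- closure W')" by auto
  moreover have "x \<in> - closure W'" using W'(3) by auto
  ultimately show ?thesis using W'(2) by (intro exI[of _ "- closure W'"]) auto
qed

lemma para_normal:
  assumes P: "paracompact_space TYPE('a::t2_space)"
  shows "normal_space (euclidean :: 'a topology)"
  unfolding normal_space_def
proof (intro allI impI)
  fix C D :: "'a set"
  assume "closedin euclidean C \<and> closedin euclidean D \<and> disjnt C D"
  then have CD: "closed C" "closed D" "C \<inter> D = {}" by (auto simp: disjnt_def)
  have "\<forall>c\<in>C. \<exists>W. open W \<and> c \<in> W \<and> closure W \<inter> D = {}"
  proof
    fix c assume "c \<in> C"
    then have "c \<notin> D" using CD(3) by auto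
    then show "\<exists>W. open W \<and> c \<in> W \<and> closure W \<inter> D = {}" using para_regular[OF P CD(2)] by blast
  qed
  from para_sep[OF P CD(1) this] obtain W where W: "open W" "C \<subseteq> W" "closure W \<inter> D = {}"
    by blast
  have "D \<subseteq> - closure W" using W(3) by auto
  moreover have "disjnt W (- closure W)" using closure_subset[of W] by (auto simp: disjnt_def)
  ultimately show "\<exists>U V. openin euclidean U \<and> openin euclidean V \<and> C \<subseteq> U \<and> D \<subseteq> V \<and> disjnt U V"
    using W(1,2) by (intro exI[of _ W] exI[of _ "- closure W"]) auto
qed

lemma selection:
  fixes G :: "('a::t2_space \<times> 'b::real_normed_vector) set" and f :: "'a \<Rightarrow> 'b"
  assumes P: "paracompact_space TYPE('a)" and G: "open G"
    and cv: "\<And>x. convex (vsection G x)" and fG: "\<And>x. (x, f x) \<in> G"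
  shows "\<exists>g. continuous_on UNIV g \<and> (\<forall>x. (x, g x) \<in> G)"
proof -
  have "\<forall>x. \<exists>U. open U \<and> x \<in> U \<and> (\<forall>z\<in>U. (z, f x) \<in> G)"
  proof
    fix x
    from open_prod_elim[OF G fG[of x]] obtain A B where AB: "open A" "open B" "(x, f x) \<in> A \<times> B" "A \<times> B \<subseteq> G" .
    have "\<forall>z\<in>A. (z, f x) \<in> G"
    proof
      fix z assume "z \<in> A"
      then have "(z, f x) \<in> A \<times> B" using AB(3) by simp
      then show "(z, f x) \<in> G" using AB(4) by (rule subsetD[rotated])
    qed
    then show "\<exists>U. open U \<and> x \<in> U \<and> (\<forall>z\<in>U. (z, f x) \<in> G)" using AB(1,3) by auto
  qed
  then have "\<exists>U. \<forall>x. open (U x) \<and> x \<in> U x \<and> (\<forall>z\<in>U x. (z, f x) \<in> G)" by (rule choice)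
  then obtain U where U1: "\<And>x. open (U x)" and U2: "\<And>x. x \<in> U x"
    and U3: "\<And>x z. z \<in> U x \<Longrightarrow> (z, f x) \<in> G" by blast
  have "(\<forall>V\<in>range U. open V) \<and> \<Union>(range U) = UNIV" using U1 U2 by blast
  then obtain \<V> :: "'a set set" where V: "\<forall>V\<in>\<V>. open V" "\<Union>\<V> = UNIV"
     "\<forall>V\<in>\<V>. \<exists>U'\<in>range U. V \<subseteq> U'" "locally_finite_in euclidean \<V>"
    using mp[OF spec[OF P[unfolded paracompact_space_def], of "range U"]] by blast
  have "\<forall>V\<in>\<V>. \<exists>x. V \<subseteq> U x"
  proof
    fix V assume "V \<in> \<V>"
    with V(3) obtain U' where "U' \<in> range U" "V \<subseteq> U'" by blast
    then show "\<exists>x. V \<subseteq> U x" by blast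
  qed
  from bchoice[OF this] obtain c where c0: "\<forall>V\<in>\<V>. V \<subseteq> U (c V)" by blast
  have c: "V \<subseteq> U (c V)" if "V \<in> \<V>" for V using c0 that by blast
  have cG: "(z, f (c V)) \<in> G" if "V \<in> \<V>" "z \<in> V" for V z
    using c[OF that(1)] that(2) by (intro U3) blast
  have inV: "\<exists>V\<in>\<V>. z \<in> V" for z
  proof -
    have "z \<in> \<Union>\<V>" using V(2) by simp
    then show ?thesis by blast
  qed
  have "\<forall>x. \<exists>Ob. open Ob \<and> x \<in> Ob \<and> (\<exists>V\<in>\<V>. closure Ob \<subseteq> V)"
  proof
    fix x
    obtain V where hV: "V \<in> \<V>" "x \<in> V" using inV by blast
    have "closed (-V)" using V(1) hV(1) by auto
    from para_regular[OF P this] hV(2) obtain W where W: "open W" "x \<in> W" "closure W \<inter> -V = {}"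
      by blast
    then have "closure W \<subseteq> V" by auto
    then show "\<exists>Ob. open Ob \<and> x \<in> Ob \<and> (\<exists>V\<in>\<V>. closure Ob \<subseteq> V)" using W(1,2) hV(1) by blast
  qed
  then have "\<exists>Ob. \<forall>x. open (Ob x) \<and> x \<in> Ob x \<and> (\<exists>V\<in>\<V>. closure (Ob x) \<subseteq> V)" by (rule choice)
  then obtain Ob where Ob1: "\<And>x. open (Ob x)" and O2: "\<And>x. x \<in> Ob x"
    and O3: "\<And>x. \<exists>V\<in>\<V>. closure (Ob x) \<subseteq> V" by blast
  have "(\<forall>V\<in>range Ob. open V) \<and> \<Union>(range Ob) = UNIV" using Ob1 O2 by blast
  then obtain \<W> :: "'a set set" where W: "\<forall>V\<in>\<W>. open V" "\<Union>\<W> = UNIV"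
     "\<forall>V\<in>\<W>. \<exists>U'\<in>range Ob. V \<subseteq> U'" "locally_finite_in euclidean \<W>"
    using mp[OF spec[OF P[unfolded paracompact_space_def], of "range Ob"]] by blast
  have Wc: "\<exists>V\<in>\<V>. closure W \<subseteq> V" if "W \<in> \<W>" for W
  proof -
    from W(3) that obtain U' where "U' \<in> range Ob" "W \<subseteq> U'" by blast
    then obtain x where "W \<subseteq> Ob x" by blast
    then have "closure W \<subseteq> closure (Ob x)" by (rule closure_mono)
    then show ?thesis using O3[of x] by blast
  qed
  define Cs where "Cs V = \<Union>(closure ` {W\<in>\<W>. closure W \<subseteq> V})" for V
  have Ccl: "closed (Cs V)" for V
  proof -
    have lf: "locally_finite_in euclidean {W\<in>\<W>. closure W \<subseteq> V}"
      by (rule locally_finite_in_subset[OF W(4)]) blast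
    have "closedin euclidean (Cs V)" using closedin_Union_locally_finite_closure[OF lf] unfolding Cs_def
      by simp
    then show ?thesis unfolding closed_closedin .
  qed
  have CsV: "Cs V \<subseteq> V" for V
    unfolding Cs_def by (rule Union_least) auto
  have Ccov: "\<exists>V\<in>\<V>. z \<in> Cs V" for z
  proof -
    have "z \<in> \<Union>\<W>" using W(2) by simp
    then obtain W' where "W' \<in> \<W>" "z \<in> W'" by (rule UnionE)
    moreover from Wc[OF this(1)] obtain V where "V \<in> \<V>" "closure W' \<subseteq> V" by blast
    ultimately have "W' \<in> {W\<in>\<W>. closure W \<subseteq> V}" "z \<in> closure W'"
      using closure_subset[of W'] by auto
    then have "z \<in> Cs V" unfolding Cs_def by (intro UnionI[of "closure W'"] imageI)
    then show ?thesis using \<open>V \<in> \<V>\<close> by blast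
  qed
  have N: "normal_space (euclidean :: 'a topology)" by (rule para_normal[OF P])
  have "\<forall>V\<in>\<V>. \<exists>\<phi>. continuous_on UNIV \<phi> \<and> (\<forall>z. 0 \<le> \<phi> z \<and> \<phi> z \<le> 1) \<and> (\<forall>z. z \<notin> V \<longrightarrow> \<phi> z = 0) \<and> (\<forall>z\<in>Cs V. \<phi> z = (1::real))"
  proof
    fix V assume "V \<in> \<V>"
    have c1: "closedin euclidean (-V)" using V(1) \<open>V \<in> \<V>\<close> by (auto simp: closed_closedin[symmetric])
    have c2: "closedin euclidean (Cs V)" using Ccl by (simp add: closed_closedin[symmetric])
    have dj: "disjnt (-V) (Cs V)" using CsV[of V] by (auto simp: disjnt_def)
    obtain \<phi> where p: "continuous_map euclidean (top_of_set {0..1::real}) \<phi>" "\<phi> ` (-V) \<subseteq> {0}" "\<phi> ` Cs V \<subseteq> {1}"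
      using Urysohn_lemma[OF N c1 c2 dj, of 0 1] by auto
    then have "continuous_map euclidean euclideanreal \<phi>" and rng: "\<And>z. \<phi> z \<in> {0..1}"
      unfolding continuous_map_in_subtopology by auto
    then have "continuous_on UNIV \<phi>" by simp
    then show "\<exists>\<phi>. continuous_on UNIV \<phi> \<and> (\<forall>z. 0 \<le> \<phi> z \<and> \<phi> z \<le> 1) \<and> (\<forall>z. z \<notin> V \<longrightarrow> \<phi> z = 0) \<and> (\<forall>z\<in>Cs V. \<phi> z = (1::real))"
      using rng p(2,3) by (intro exI[of _ \<phi>]) auto
  qed
  from bchoice[OF this] obtain \<phi> where ph: "\<forall>V\<in>\<V>. continuous_on UNIV (\<phi> V) \<and> (\<forall>z. 0 \<le> \<phi> V z \<and> \<phi> V z \<le> 1) \<and> (\<forall>z. z \<notin> V \<longrightarrow> \<phi> V z = 0) \<and> (\<forall>z\<in>Cs V. \<phi> V z = (1::real))"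
    by blast
  have ph1: "\<And>V. V \<in> \<V> \<Longrightarrow> continuous_on UNIV (\<phi> V)"
    and ph2: "\<And>V z. V \<in> \<V> \<Longrightarrow> 0 \<le> \<phi> V z"
    and ph3: "\<And>V z. V \<in> \<V> \<Longrightarrow> z \<notin> V \<Longrightarrow> \<phi> V z = 0"
    and ph4: "\<And>V z. V \<in> \<V> \<Longrightarrow> z \<in> Cs V \<Longrightarrow> \<phi> V z = 1"
    using ph by auto
  define S where "S z = {V\<in>\<V>. z \<in> V}" for z
  have nb: "\<exists>N. open N \<and> z \<in> N \<and> finite {V\<in>\<V>. V \<inter> N \<noteq> {}}" for z
    using V(4) unfolding locally_finite_in_def by simp
  have SF: "S z \<subseteq> {V\<in>\<V>. V \<inter> N \<noteq> {}}" if "z \<in> N" for z N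
    unfolding S_def using that by blast
  have finS: "finite (S z)" for z
  proof -
    obtain N where "open N" "z \<in> N" "finite {V\<in>\<V>. V \<inter> N \<noteq> {}}" using nb by blast
    then show ?thesis using SF finite_subset by blast
  qed
  define s where "s z = (\<Sum>V\<in>S z. \<phi> V z)" for z
  define num where "num z = (\<Sum>V\<in>S z. \<phi> V z *\<^sub>R f (c V))" for z
  define g where "g z = (1 / s z) *\<^sub>R num z" for z
  have s1: "s z \<ge> 1" for z
  proof -
    obtain V where hV: "V \<in> \<V>" "z \<in> Cs V" using Ccov by blast
    then have VS: "V \<in> S z" unfolding S_def using CsV by blast
    have "\<phi> V z \<le> s z" unfolding s_def
      by (rule member_le_sum[OF VS _ finS]) (auto simp: S_def intro: ph2)
    then show ?thesis using ph4[OF hV] by simp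
  qed
  have gG: "(z, g z) \<in> G" for z
  proof -
    have sp: "s z > 0" using s1[of z] by simp
    have "g z = (\<Sum>V\<in>S z. (\<phi> V z / s z) *\<^sub>R f (c V))"
      unfolding g_def num_def by (simp add: scaleR_sum_right)
    also have "\<dots> \<in> vsection G z"
    proof (rule convex_sum[OF finS cv])
      show "(\<Sum>V\<in>S z. \<phi> V z / s z) = 1"
        using sp unfolding s_def by (simp add: sum_divide_distrib[symmetric])
      show "\<And>V. V \<in> S z \<Longrightarrow> 0 \<le> \<phi> V z / s z"
        using sp ph2 unfolding S_def by simp
      show "\<And>V. V \<in> S z \<Longrightarrow> f (c V) \<in> vsection G z"
        using cG unfolding S_def vsection_def by simp
    qed
    finally show ?thesis unfolding vsection_def by simp
  qed
  have ct: "isCont g z0" for z0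
  proof -
    obtain N where N: "open N" "z0 \<in> N" and finF: "finite {V\<in>\<V>. V \<inter> N \<noteq> {}}" using nb by blast
    define F where "F = {V\<in>\<V>. V \<inter> N \<noteq> {}}"
    have finF': "finite F" using finF unfolding F_def .
    have SFz: "S z \<subseteq> F" if "z \<in> N" for z using SF[OF that] unfolding F_def .
    have zero: "\<phi> V z = 0" if "z \<in> N" "V \<in> F - S z" for V z
      using that ph3 unfolding F_def S_def by blast
    have seq: "s z = (\<Sum>V\<in>F. \<phi> V z)" if "z \<in> N" for z
      unfolding s_def by (rule sum.mono_neutral_left[OF finF' SFz[OF that]]) (use zero that in blast)
    have neq: "num z = (\<Sum>V\<in>F. \<phi> V z *\<^sub>R f (c V))" if "z \<in> N" for z
      unfolding num_def by (rule sum.mono_neutral_left[OF finF' SFz[OF that]]) (use zero that in simp)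
    define h where "h z = (1 / (\<Sum>V\<in>F. \<phi> V z)) *\<^sub>R (\<Sum>V\<in>F. \<phi> V z *\<^sub>R f (c V))" for z
    have phc: "isCont (\<phi> V) z" if "V \<in> F" for V z
      using ph1[of V] that unfolding F_def by (simp add: continuous_on_eq_continuous_at)
    have "continuous_on N h"
    proof (rule continuous_at_imp_continuous_on, rule ballI)
      fix z assume "z \<in> N"
      then have nz: "(\<Sum>V\<in>F. \<phi> V z) \<noteq> 0" using seq s1[of z] by simp
      show "isCont h z" unfolding h_def
        by (intro continuous_intros phc nz) auto
    qed
    moreover have "\<And>z. z \<in> N \<Longrightarrow> h z = g z" unfolding h_def g_def using seq neq by simp
    ultimately have "continuous_on N g" using continuous_on_cong by blast
    then show ?thesis using N continuous_on_eq_continuous_at by blast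
  qed
  show ?thesis using ct gG by (intro exI[of _ g]) (simp add: continuous_at_imp_continuous_on)
qed

lemma backward:
  fixes f :: "'a::t2_space \<Rightarrow> 'b::real_normed_vector"
  assumes P: "paracompact_space TYPE('a)"
    and G: "\<forall>n. open_strip (G n)" "(\<Inter>n. G n) = graph_of f"
      "\<forall>x. (\<lambda>n. ediam (vsection (G n) x)) \<longlonglongrightarrow> 0"
  shows "baire1 f"
proof -
  have fG: "(x, f x) \<in> G n" for x n
  proof -
    have "(x, f x) \<in> graph_of f" unfolding graph_of_def by blast
    then have "(x, f x) \<in> (\<Inter>n. G n)" using G(2) by simp
    then show ?thesis by (rule INT_D) simp
  qed
  have "\<forall>n. \<exists>g. continuous_on UNIV g \<and> (\<forall>x. (x, g x) \<in> G n)"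
  proof
    fix n
    have o: "open (G n)" and cx: "\<And>x. convex (vsection (G n) x)" using G(1) unfolding open_strip_def by auto
    show "\<exists>g. continuous_on UNIV g \<and> (\<forall>x. (x, g x) \<in> G n)"
      by (rule selection[OF P o cx fG])
  qed
  then have "\<exists>g. \<forall>n. continuous_on UNIV (g n) \<and> (\<forall>x. (x, g n x) \<in> G n)" by (rule choice)
  then obtain g where g1: "\<And>n. continuous_on UNIV (g n)" and g2: "\<And>n x. (x, g n x) \<in> G n" by blast
  have "(\<lambda>n. g n x) \<longlonglongrightarrow> f x" for x
  proof (rule metric_LIMSEQ_I)
    fix r :: real assume r: "r > 0"
    have "eventually (\<lambda>n. ediam (vsection (G n) x) < ereal r) sequentially"
      using G(3) r by (intro order_tendstoD) (auto simp: zero_ereal_def)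
    then obtain N where N: "\<And>n. n \<ge> N \<Longrightarrow> ediam (vsection (G n) x) < ereal r"
      unfolding eventually_sequentially by blast
    show "\<exists>no. \<forall>n\<ge>no. dist (g n x) (f x) < r"
    proof (intro exI allI impI)
      fix n assume "n \<ge> N"
      have "g n x \<in> vsection (G n) x" "f x \<in> vsection (G n) x"
        using g2 fG unfolding vsection_def by auto
      then have "ereal (dist (g n x) (f x)) \<le> ediam (vsection (G n) x)" by (rule ediam_ge)
      then have "ereal (dist (g n x) (f x)) < ereal r" using N[OF \<open>n \<ge> N\<close>] by (rule order.strict_trans1)
      then show "dist (g n x) (f x) < r" by simp
    qed
  qed
  then show ?thesis unfolding baire1_def using g1 by blast
qed

theorem theorem1p3:
  fixes f :: "'a::t2_space \<Rightarrow> 'b::banach"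
  assumes "paracompact_space TYPE('a)"
  shows "baire1 f \<longleftrightarrow>
    (\<exists>G :: nat \<Rightarrow> ('a \<times> 'b) set. (\<forall>n. open_strip (G n)) \<and>
        (\<Inter>n. G n) = graph_of f \<and>
        (\<forall>x. (\<lambda>n. ediam (vsection (G n) x)) \<longlonglongrightarrow> 0))"
proof
  assume "baire1 f" then show "\<exists>G :: nat \<Rightarrow> ('a \<times> 'b) set. (\<forall>n. open_strip (G n)) \<and>
        (\<Inter>n. G n) = graph_of f \<and>
        (\<forall>x. (\<lambda>n. ediam (vsection (G n) x)) \<longlonglongrightarrow> 0)" by (rule forward)
next
  assume "\<exists>G :: nat \<Rightarrow> ('a \<times> 'b) set. (\<forall>n. open_strip (G n)) \<and>
        (\<Inter>n. G n) = graph_of f \<and>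
        (\<forall>x. (\<lambda>n. ediam (vsection (G n) x)) \<longlonglongrightarrow> 0)"
  then obtain G :: "nat \<Rightarrow> ('a \<times> 'b) set" where "\<forall>n. open_strip (G n)" "(\<Inter>n. G n) = graph_of f"
        "\<forall>x. (\<lambda>n. ediam (vsection (G n) x)) \<longlonglongrightarrow> 0" by blast
  then show "baire1 f" by (rule backward[OF assms])
qed

end
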